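(* Let $G=(L\cup R,E)$ be a $(c,d,\alpha,\delta)$-bipartite expander with $L=[n]$, and $C_0\subseteq\mathbb{F}_2^d$ a linear code of minimum distance $d_0\ge2$. Let $x\in\mathbb{F}_2^n$ and $y\in T(G,C_0)$ with $d_H(x,y)\le\alpha n$, and let $F=F(x,y)$. Then $$c|F|\ge|U(x)|\ge|N_{\le d_0-1}(F)|\ge\frac{\delta d_0-1}{d_0-1}\cdot c|F|.$$
   Context: A bipartite graph is $(c,d)$-regular if left degrees are $c$ and right degrees $d$. $N(S)$ is the neighborhood of $S$, $N_i(S)$ the set of vertices adjacent to exactly $i$ vertices of $S$, and $N_{\le t}(S)=\bigcup_{1\le j\le t}N_j(S)$. A $(c,d,\alpha,\delta)$-bipartite expander is a $(c,d)$-regular bipartite graph with $|N(S)|\ge\delta c|S|$ for every $S\subseteq L$ with $|S|\le\alpha|L|$. Tanner code: $L=[n]$, for each $v\in R$ a fixed ordering of $N(v)$ defines the restriction $x_{N(v)}\in\mathbb{F}_2^d$, and $T(G,C_0)=\{x\in\mathbb{F}_2^n: x_{N(v)}\in C_0\ \forall v\in R\}$. $F(x,y)=\{i\in[n]:x_i\ne y_i\}$ and $U(x)=\{v\in R:x_{N(v)}\notin C_0\}$. *)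

theory Defs
  imports Main "HOL-Library.Multiset" Complex_Main
begin

(* Bipartite graph: left vertices L = [n] = {1..n}, right vertex set R (finite),
   edge set E \<subseteq> L \<times> R (simple graph, no multi-edges). Field F_2 is modelled by bool,
   addition being xor (\<noteq>). Vectors in F_2^n are functions nat \<Rightarrow> bool of which only
   the values on {1..n} matter. *)

definition nbhd :: "(nat \<times> 'r) set \<Rightarrow> 'r set \<Rightarrow> nat set \<Rightarrow> 'r set" where
  "nbhd E R S = {v \<in> R. \<exists>u \<in> S. (u, v) \<in> E}"

definition nbhd_exact :: "(nat \<times> 'r) set \<Rightarrow> 'r set \<Rightarrow> nat \<Rightarrow> nat set \<Rightarrow> 'r set" where
  "nbhd_exact E R i S = {v \<in> R. card {u \<in> S. (u, v) \<in> E} = i}"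

definition nbhd_le :: "(nat \<times> 'r) set \<Rightarrow> 'r set \<Rightarrow> nat \<Rightarrow> nat set \<Rightarrow> 'r set" where
  "nbhd_le E R t S = (\<Union>j \<in> {1..t}. nbhd_exact E R j S)"

definition bip_regular :: "nat \<Rightarrow> 'r set \<Rightarrow> (nat \<times> 'r) set \<Rightarrow> nat \<Rightarrow> nat \<Rightarrow> bool" where
  "bip_regular n R E c d \<longleftrightarrow> finite R \<and> E \<subseteq> {1..n} \<times> R \<and>
     (\<forall>u \<in> {1..n}. card {v \<in> R. (u, v) \<in> E} = c) \<and>
     (\<forall>v \<in> R. card {u \<in> {1..n}. (u, v) \<in> E} = d)"

definition bip_expander ::
  "nat \<Rightarrow> 'r set \<Rightarrow> (nat \<times> 'r) set \<Rightarrow> nat \<Rightarrow> nat \<Rightarrow> real \<Rightarrow> real \<Rightarrow> bool" where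
  "bip_expander n R E c d \<alpha> \<delta> \<longleftrightarrow> bip_regular n R E c d \<and>
     (\<forall>S \<subseteq> {1..n}. real (card S) \<le> \<alpha> * real n \<longrightarrow>
        real (card (nbhd E R S)) \<ge> \<delta> * real c * real (card S))"

definition valid_orderings :: "'r set \<Rightarrow> (nat \<times> 'r) set \<Rightarrow> nat \<Rightarrow> ('r \<Rightarrow> nat \<Rightarrow> nat) \<Rightarrow> bool" where
  "valid_orderings R E d ord \<longleftrightarrow>
     (\<forall>v \<in> R. bij_betw (ord v) {..<d} {u. (u, v) \<in> E})"

definition restr :: "('r \<Rightarrow> nat \<Rightarrow> nat) \<Rightarrow> nat \<Rightarrow> 'r \<Rightarrow> (nat \<Rightarrow> bool) \<Rightarrow> bool list" where
  "restr ord d v x = map (\<lambda>j. x (ord v j)) [0..<d]"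

(* words in F_2^d are bool lists of length d *)
definition hamming_list :: "bool list \<Rightarrow> bool list \<Rightarrow> nat" where
  "hamming_list w w' = card {j. j < length w \<and> w ! j \<noteq> w' ! j}"

definition linear_code :: "nat \<Rightarrow> bool list set \<Rightarrow> bool" where
  "linear_code d C \<longleftrightarrow> C \<subseteq> {w. length w = d} \<and> replicate d False \<in> C \<and>
     (\<forall>w \<in> C. \<forall>w' \<in> C. map2 (\<noteq>) w w' \<in> C)"

definition min_distance :: "bool list set \<Rightarrow> nat \<Rightarrow> bool" where
  "min_distance C d0 \<longleftrightarrow>
     (\<exists>w \<in> C. \<exists>w' \<in> C. w \<noteq> w' \<and> hamming_list w w' = d0) \<and>
     (\<forall>w \<in> C. \<forall>w' \<in> C. w \<noteq> w' \<longrightarrow> hamming_list w w' \<ge> d0)"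

definition tanner_code ::
  "nat \<Rightarrow> 'r set \<Rightarrow> ('r \<Rightarrow> nat \<Rightarrow> nat) \<Rightarrow> nat \<Rightarrow> bool list set \<Rightarrow> (nat \<Rightarrow> bool) set" where
  "tanner_code n R ord d C = {x. \<forall>v \<in> R. restr ord d v x \<in> C}"

definition dH :: "nat \<Rightarrow> (nat \<Rightarrow> bool) \<Rightarrow> (nat \<Rightarrow> bool) \<Rightarrow> nat" where
  "dH n x y = card {i \<in> {1..n}. x i \<noteq> y i}"

definition diff_set :: "nat \<Rightarrow> (nat \<Rightarrow> bool) \<Rightarrow> (nat \<Rightarrow> bool) \<Rightarrow> nat set" where
  "diff_set n x y = {i \<in> {1..n}. x i \<noteq> y i}"

definition unsat :: "'r set \<Rightarrow> ('r \<Rightarrow> nat \<Rightarrow> nat) \<Rightarrow> nat \<Rightarrow> bool list set \<Rightarrow> (nat \<Rightarrow> bool) \<Rightarrow> 'r set" where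
  "unsat R ord d C x = {v \<in> R. restr ord d v x \<notin> C}"

end

theory Submission
  imports Defs
begin

lemma double_count:
  assumes "finite F" "finite R"
  shows "(\<Sum>v\<in>R. card {u\<in>F. P u v}) = (\<Sum>u\<in>F. card {v\<in>R. P u v})"
proof -
  have e1: "card {u\<in>F. P u v} = (\<Sum>u\<in>F. of_bool (P u v))" for v
  proof -
    have "{u\<in>F. P u v} = F \<inter> {u. P u v}" by auto
    then show ?thesis using sum_of_bool_eq[OF assms(1) assms(1), of "\<lambda>u. P u v"] by (metis of_nat_id)
  qed
  have e2: "card {v\<in>R. P u v} = (\<Sum>v\<in>R. of_bool (P u v))" for u
  proof -
    have "{v\<in>R. P u v} = R \<inter> {v. P u v}" by auto
    then show ?thesis using sum_of_bool_eq[OF assms(2) assms(2), of "\<lambda>v. P u v"] by (metis of_nat_id)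
  qed
  show ?thesis unfolding e1 e2 by (rule sum.swap)
qed

lemma nbhd_le_eq:
  "nbhd_le E R t S = {v\<in>R. 1 \<le> card {u \<in> S. (u, v) \<in> E} \<and> card {u \<in> S. (u, v) \<in> E} \<le> t}"
  unfolding nbhd_le_def nbhd_exact_def by auto

lemma nbhd_eq:
  assumes "finite S"
  shows "nbhd E R S = {v\<in>R. 1 \<le> card {u \<in> S. (u, v) \<in> E}}"
proof -
  have "(\<exists>u\<in>S. (u, v) \<in> E) \<longleftrightarrow> 1 \<le> card {u \<in> S. (u, v) \<in> E}" for v
    using assms by (auto simp: Suc_le_eq card_gt_0_iff)
  then show ?thesis unfolding nbhd_def by auto
qed

theorem lemma2p7:
  fixes n c d d0 :: nat and R :: "'r set" and E :: "(nat \<times> 'r) set"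
    and \<alpha> \<delta> :: real and ord :: "'r \<Rightarrow> nat \<Rightarrow> nat" and C0 :: "bool list set"
    and x y :: "nat \<Rightarrow> bool"
  assumes "bip_expander n R E c d \<alpha> \<delta>"
    and "valid_orderings R E d ord"
    and "linear_code d C0"
    and "min_distance C0 d0" and "d0 \<ge> 2"
    and "y \<in> tanner_code n R ord d C0"
    and "real (dH n x y) \<le> \<alpha> * real n"
  shows "real c * real (card (diff_set n x y)) \<ge> real (card (unsat R ord d C0 x))
       \<and> real (card (unsat R ord d C0 x)) \<ge> real (card (nbhd_le E R (d0 - 1) (diff_set n x y)))
       \<and> real (card (nbhd_le E R (d0 - 1) (diff_set n x y)))
           \<ge> (\<delta> * real d0 - 1) / (real d0 - 1) * real c * real (card (diff_set n x y))"
proof -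
  define F where "F = diff_set n x y"
  define K where "K v = card {u \<in> F. (u, v) \<in> E}" for v
  define NF where "NF = nbhd E R F"
  define NL where "NL = nbhd_le E R (d0 - 1) F"
  define U where "U = unsat R ord d C0 x"
  have reg: "bip_regular n R E c d" and exp: "\<forall>S \<subseteq> {1..n}. real (card S) \<le> \<alpha> * real n \<longrightarrow>
        real (card (nbhd E R S)) \<ge> \<delta> * real c * real (card S)"
    using assms(1) unfolding bip_expander_def by auto
  have finR: "finite R" and Esub: "E \<subseteq> {1..n} \<times> R"
    and degL: "\<forall>u \<in> {1..n}. card {v \<in> R. (u, v) \<in> E} = c"
    using reg unfolding bip_regular_def by auto
  have FS: "F \<subseteq> {1..n}" unfolding F_def diff_set_def by auto
  have finF: "finite F" using FS finite_subset by blast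
  have cardF: "card F = dH n x y" unfolding F_def diff_set_def dH_def by simp
  have NFexp: "real (card NF) \<ge> \<delta> * real c * real (card F)"
    using exp FS assms(7) cardF unfolding NF_def by auto
  have sumK: "(\<Sum>v\<in>R. K v) = c * card F"
  proof -
    have "(\<Sum>v\<in>R. K v) = (\<Sum>u\<in>F. card {v\<in>R. (u, v) \<in> E})"
      unfolding K_def by (rule double_count[OF finF finR])
    also have "\<dots> = (\<Sum>u\<in>F. c)" using degL FS by (intro sum.cong) auto
    finally show ?thesis by simp
  qed
  have NFeq: "NF = {v\<in>R. 1 \<le> K v}" unfolding NF_def K_def using nbhd_eq[OF finF] by simp
  have NLeq: "NL = {v\<in>R. 1 \<le> K v \<and> K v \<le> d0 - 1}" unfolding NL_def K_def nbhd_le_eq by simp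
  have sumNF: "(\<Sum>v\<in>NF. K v) = c * card F"
  proof -
    have "(\<Sum>v\<in>R. K v) = (\<Sum>v\<in>NF. K v)"
      unfolding NFeq using finR by (intro sum.mono_neutral_right) auto
    then show ?thesis using sumK by simp
  qed
  have finNF: "finite NF" using finR NFeq by simp
  have NLsub: "NL \<subseteq> NF" using NFeq NLeq by auto
  have hd: "hamming_list (restr ord d v x) (restr ord d v y) = K v" if v: "v \<in> R" for v
  proof -
    define FE where "FE = {u \<in> F. (u, v) \<in> E}"
    define S where "S = {j\<in>{..<d}. ord v j \<in> FE}"
    have bij: "bij_betw (ord v) {..<d} {u. (u, v) \<in> E}"
      using assms(2) v unfolding valid_orderings_def by auto
    have img: "ord v ` {..<d} = {u. (u, v) \<in> E}" and inj: "inj_on (ord v) {..<d}"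
      using bij unfolding bij_betw_def by auto
    have inn: "j < d \<Longrightarrow> ord v j \<in> {1..n}" for j using img Esub by blast
    have e1: "{j. j < length (restr ord d v x) \<and> restr ord d v x ! j \<noteq> restr ord d v y ! j}
        = {j. j < d \<and> x (ord v j) \<noteq> y (ord v j)}"
      by (auto simp: restr_def)
    have e2: "{j. j < d \<and> x (ord v j) \<noteq> y (ord v j)} = S"
    proof (rule set_eqI)
      fix j
      show "j \<in> {j. j < d \<and> x (ord v j) \<noteq> y (ord v j)} \<longleftrightarrow> j \<in> S"
      proof
        assume "j \<in> {j. j < d \<and> x (ord v j) \<noteq> y (ord v j)}"
        then have "j < d" "x (ord v j) \<noteq> y (ord v j)" by auto
        moreover have "(ord v j, v) \<in> E" using img \<open>j < d\<close> by blast
        ultimately show "j \<in> S" using inn[of j] unfolding S_def FE_def F_def diff_set_def by auto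
      next
        assume "j \<in> S"
        then show "j \<in> {j. j < d \<and> x (ord v j) \<noteq> y (ord v j)}"
          unfolding S_def FE_def F_def diff_set_def by auto
      qed
    qed
    have e3: "ord v ` S = FE"
    proof
      show "ord v ` S \<subseteq> FE" unfolding S_def by auto
      show "FE \<subseteq> ord v ` S"
      proof
        fix u assume u: "u \<in> FE"
        then have "u \<in> ord v ` {..<d}" using img unfolding FE_def by auto
        then obtain j where "j < d" "u = ord v j" by auto
        then show "u \<in> ord v ` S" using u unfolding S_def by auto
      qed
    qed
    have "inj_on (ord v) S" using inj unfolding S_def by (rule inj_on_subset) auto
    then have "card S = card FE" using e3 card_image by fastforce
    then show ?thesis unfolding hamming_list_def e1 e2 K_def FE_def by simp
  qed
  have yC: "restr ord d v y \<in> C0" if "v \<in> R" for v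
    using assms(6) that unfolding tanner_code_def by auto
  have md: "\<forall>w \<in> C0. \<forall>w' \<in> C0. w \<noteq> w' \<longrightarrow> hamming_list w w' \<ge> d0"
    using assms(4) unfolding min_distance_def by auto
  have USub: "U \<subseteq> NF"
  proof
    fix v assume vU: "v \<in> U"
    then have v: "v \<in> R" "restr ord d v x \<notin> C0" unfolding U_def unsat_def by auto
    show "v \<in> NF"
    proof (rule ccontr)
      assume "v \<notin> NF"
      then have "K v = 0" using NFeq v by auto
      then have "hamming_list (restr ord d v x) (restr ord d v y) = 0" using hd v by simp
      then have "card {j. j < d \<and> x (ord v j) \<noteq> y (ord v j)} = 0"
        unfolding hamming_list_def restr_def by simp
      then have "\<forall>j<d. x (ord v j) = y (ord v j)" by (simp add: card_eq_0_iff)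
      then have "restr ord d v x = restr ord d v y"
        unfolding restr_def by simp
      then show False using v yC by simp
    qed
  qed
  have NLU: "NL \<subseteq> U"
  proof
    fix v assume vL: "v \<in> NL"
    then have v: "v \<in> R" "1 \<le> K v" "K v \<le> d0 - 1" using NLeq by auto
    show "v \<in> U"
    proof (rule ccontr)
      assume "v \<notin> U"
      then have xC: "restr ord d v x \<in> C0" using v unfolding U_def unsat_def by auto
      have "restr ord d v x \<noteq> restr ord d v y"
        using hd[OF v(1)] v(2) unfolding hamming_list_def by auto
      then have "hamming_list (restr ord d v x) (restr ord d v y) \<ge> d0" using md xC yC[OF v(1)] by blast
      then have "K v \<ge> d0" using hd[OF v(1)] by simp
      then show False using v assms(5) by linarith
    qed
  qed
  have cU: "card U \<le> card NF" using USub finNF card_mono by blast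
  have cNF: "card NF \<le> c * card F"
  proof -
    have "card NF = (\<Sum>v\<in>NF. 1)" by simp
    also have "\<dots> \<le> (\<Sum>v\<in>NF. K v)" using NFeq by (intro sum_mono) auto
    finally show ?thesis using sumNF by simp
  qed
  have cLU: "card NL \<le> card U" using NLU finNF USub finite_subset card_mono by metis
  have key: "card NL + d0 * (card NF - card NL) \<le> c * card F"
  proof -
    have finNL: "finite NL" using NLsub finNF finite_subset by blast
    have sp: "(\<Sum>v\<in>NF. K v) = (\<Sum>v\<in>NL. K v) + (\<Sum>v\<in>NF - NL. K v)"
      using NLsub finNF by (metis sum.subset_diff add.commute)
    have A: "card NL \<le> (\<Sum>v\<in>NL. K v)"
    proof -
      have "(\<Sum>v\<in>NL. K v) \<ge> (\<Sum>v\<in>NL. 1)" using NLeq by (intro sum_mono) auto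
      then show ?thesis by simp
    qed
    have B: "d0 * (card NF - card NL) \<le> (\<Sum>v\<in>NF - NL. K v)"
    proof -
      have "(\<Sum>v\<in>NF - NL. K v) \<ge> (\<Sum>v\<in>NF - NL. d0)"
        using NLeq NFeq assms(5) by (intro sum_mono) auto
      moreover have "card (NF - NL) = card NF - card NL" using NLsub finNL by (simp add: card_Diff_subset)
      ultimately show ?thesis by (simp add: mult.commute)
    qed
    show ?thesis using add_mono[OF A B] sp sumNF by linarith
  qed
  have cLNF: "card NL \<le> card NF" using NLsub finNF card_mono by blast
  have keyr: "real (card NL) + real d0 * (real (card NF) - real (card NL)) \<le> real c * real (card F)"
    using key cLNF by (metis of_nat_add of_nat_diff of_nat_le_iff of_nat_mult)
  have d0p: "real d0 - 1 > 0" using assms(5) by simp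
  have "(\<delta> * real d0 - 1) * real c * real (card F) \<le> (real d0 - 1) * real (card NL)"
  proof -
    have "(\<delta> * real d0 - 1) * real c * real (card F) = real d0 * (\<delta> * real c * real (card F)) - real c * real (card F)"
      by (simp add: algebra_simps)
    also have "\<dots> \<le> real d0 * real (card NF) - real c * real (card F)"
      using NFexp by (simp add: mult_left_mono)
    also have "\<dots> \<le> (real d0 - 1) * real (card NL)" using keyr by (simp add: algebra_simps)
    finally show ?thesis .
  qed
  then have p3: "(\<delta> * real d0 - 1) / (real d0 - 1) * real c * real (card F) \<le> real (card NL)"
    using d0p by (simp add: field_simps)
  show ?thesis
    using p3 cU cNF cLU unfolding F_def[symmetric] NL_def[symmetric] U_def[symmetric]
    by (metis le_trans of_nat_le_iff of_nat_mult)
qed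

end
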